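(* Let $\mathcal X,\mathcal W$ be measurable spaces, $\mathcal Z=\mathcal X\times\mathcal W$, and let $(X,W,Y)\sim P_{X,W,Y}$ on $\mathcal X\times\mathcal W\times\mathbb R$ with $\mathbb E[Y^2]<\infty$; write $Z=(X,W)$. Let $n,m\ge1$, $N=n+m$, $\lambda\ge0$. Observe training data $\mathscr D$ consisting of $n$ i.i.d. labeled samples $(Z_i,Y_i)\sim P_{X,W,Y}$ and $m$ i.i.d. unlabeled samples $Z_j\sim P_{X,W}$, and let $(X,W)$ denote an independent test point. Let $\mathcal F\subset L^2(P_X)$, $\mathcal G\subset L^2(P_Z)$ be nonempty closed convex sets (functions on $\mathcal X$ identified with their lifts to $\mathcal Z$), define $$\mathcal{L}(f,g;\lambda)=\frac{n}{N}\mathbb{E}[(Y-f(X))^2]+\frac{m}{N}\mathbb{E}[(g(Z)-f(X))^2]+\lambda\frac{n}{N}\mathbb{E}[(Y-g(Z))^2],$$ and let $(f^\star,g^\star)\in\mathcal F\times\mathcal G$ be a minimizer of $\mathcal L(\cdot,\cdot;\lambda)$ over $\mathcal F\times\mathcal G$. Let $\mu(x)=\mathbb E[Y\mid X=x]$, $\eta(z)=\mathbb E[Y\mid Z=z]$, and assume $\mu\in\mathcal F$, $\mu\in\mathcal G$ and $\eta\in\mathcal G$. Then any estimator $(\hat f,\hat g)\in\mathcal F\times\mathcal G$ (constructed from $\mathscr D$) satisfies $$\mathbb{E}_{\mathscr{D},X}\left[(\hat f(X)-\mu(X))^2\right]\le\frac{\mathbb{E}_{\mathscr{D}}\left[\mathcal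 L(\hat f,\hat g;\lambda)-\mathcal L(f^\star,g^\star;\lambda)\right]}{\gamma_{n,m,\lambda}(\rho_\star)},$$ where $\gamma_{n,m,\lambda}(\rho_\star)=1-\frac{m^2}{N(m+n\lambda)}\rho_\star^2\ge\frac{n}{N}$.
   Context: Define the estimation errors $\hat e_f(X)=f^\star(X)-\hat f(X)$ and $\hat e_g(Z)=g^\star(Z)-\hat g(Z)$, and the correlation score $$\rho_\star=\frac{\big|\mathbb{E}_{\mathscr{D},Z}[\hat e_f(X)\hat e_g(Z)]\big|}{\big(\mathbb{E}_{\mathscr{D},X}[\hat e_f^2(X)]\big)^{1/2}\big(\mathbb{E}_{\mathscr{D},Z}[\hat e_g^2(Z)]\big)^{1/2}}\in[0,1],$$ with the convention $\rho_\star=0$ if either denominator factor is zero. Expectations $\mathbb E_{\mathscr D,\cdot}$ are over the training data and the independent test point; in $\mathbb E_{\mathscr D}[\mathcal L(\hat f,\hat g;\lambda)]$ the population loss is evaluated at the (data-dependent) functions and then averaged over $\mathscr D$. *)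

theory Defs
  imports "HOL-Probability.Probability"
begin

definition L2fun :: "'a measure \<Rightarrow> ('a \<Rightarrow> real) set" where
  "L2fun M = {f. f \<in> borel_measurable M \<and> integrable M (\<lambda>x. (f x)\<^sup>2)}"

text \<open>A set S of representatives is closed in L^2(M): it contains every L^2 limit
  of sequences in S (in particular it is closed under a.e. equality).\<close>
definition L2_closed :: "'a measure \<Rightarrow> ('a \<Rightarrow> real) set \<Rightarrow> bool" where
  "L2_closed M S \<longleftrightarrow>
     (\<forall>fs f. (\<forall>k. fs k \<in> S) \<and> f \<in> L2fun M \<and>
        (\<lambda>k. integral\<^sup>L M (\<lambda>x. (fs k x - f x)\<^sup>2)) \<longlonglongrightarrow> 0 \<longrightarrow> f \<in> S)"

definition fun_convex :: "('a \<Rightarrow> real) set \<Rightarrow> bool" where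
  "fun_convex S \<longleftrightarrow>
     (\<forall>f\<in>S. \<forall>g\<in>S. \<forall>t::real. 0 \<le> t \<and> t \<le> 1 \<longrightarrow> (\<lambda>x. t * f x + (1 - t) * g x) \<in> S)"

definition Loss :: "(('x \<times> 'w) \<times> real) measure \<Rightarrow> nat \<Rightarrow> nat \<Rightarrow> real
     \<Rightarrow> ('x \<Rightarrow> real) \<Rightarrow> ('x \<times> 'w \<Rightarrow> real) \<Rightarrow> real" where
  "Loss P n m lam f g =
     real n / real (n + m) * (\<integral>((x, w), y). (y - f x)\<^sup>2 \<partial>P)
   + real m / real (n + m) * (\<integral>((x, w), y). (g (x, w) - f x)\<^sup>2 \<partial>P)
   + lam * (real n / real (n + m)) * (\<integral>((x, w), y). (y - g (x, w))\<^sup>2 \<partial>P)"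

text \<open>Distribution of the training data: n labeled samples i.i.d. P and
  m unlabeled samples i.i.d. P_Z (the law of Z = (X,W)), all independent.\<close>
definition data_measure :: "(('x \<times> 'w) \<times> real) measure \<Rightarrow> ('x \<times> 'w) measure \<Rightarrow> nat \<Rightarrow> nat
     \<Rightarrow> ((nat \<Rightarrow> ('x \<times> 'w) \<times> real) \<times> (nat \<Rightarrow> 'x \<times> 'w)) measure" where
  "data_measure P MZ n m = (PiM {..<n} (\<lambda>_. P)) \<Otimes>\<^sub>M (PiM {..<m} (\<lambda>_. distr P MZ fst))"

text \<open>Correlation score rho_star; expectations over the data DM and the independent
  test point (PX = law of X, PZ = law of Z), with the convention rho = 0 if a
  denominator factor vanishes.\<close>
definition rho_star :: "'d measure \<Rightarrow> 'x measure \<Rightarrow> ('x \<times> 'w) measure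
     \<Rightarrow> ('x \<Rightarrow> real) \<Rightarrow> ('x \<times> 'w \<Rightarrow> real) \<Rightarrow> ('d \<Rightarrow> 'x \<Rightarrow> real) \<Rightarrow> ('d \<Rightarrow> 'x \<times> 'w \<Rightarrow> real) \<Rightarrow> real" where
  "rho_star DM PX PZ fs gs fh gh =
     (let num = \<bar>\<integral>(d, z). (fs (fst z) - fh d (fst z)) * (gs z - gh d z) \<partial>(DM \<Otimes>\<^sub>M PZ)\<bar>;
          a = (\<integral>(d, x). (fs x - fh d x)\<^sup>2 \<partial>(DM \<Otimes>\<^sub>M PX));
          b = (\<integral>(d, z). (gs z - gh d z)\<^sup>2 \<partial>(DM \<Otimes>\<^sub>M PZ))
      in if a = 0 \<or> b = 0 then 0 else num / (sqrt a * sqrt b))"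

end

theory Submission
  imports Defs
begin

definition sqi :: "'a measure \<Rightarrow> ('a \<Rightarrow> real) \<Rightarrow> bool" where
  "sqi M u \<longleftrightarrow> u \<in> borel_measurable M \<and> integrable M (\<lambda>x. (u x)\<^sup>2)"

lemma abs_mult_le_sq: "\<bar>(a::real) * b\<bar> \<le> a\<^sup>2 + b\<^sup>2"
proof -
  have "0 \<le> (\<bar>a\<bar> - \<bar>b\<bar>)\<^sup>2" by simp
  then have "2 * (\<bar>a\<bar> * \<bar>b\<bar>) \<le> \<bar>a\<bar>\<^sup>2 + \<bar>b\<bar>\<^sup>2" by (simp add: power2_diff)
  moreover have "0 \<le> \<bar>a\<bar> * \<bar>b\<bar>" by simp
  ultimately have "\<bar>a\<bar> * \<bar>b\<bar> \<le> \<bar>a\<bar>\<^sup>2 + \<bar>b\<bar>\<^sup>2" by linarith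
  then show ?thesis by (simp add: abs_mult)
qed

lemma sqi_mult: "sqi M u \<Longrightarrow> sqi M v \<Longrightarrow> integrable M (\<lambda>x. u x * v x)"
  unfolding sqi_def
  apply (rule Bochner_Integration.integrable_bound[where f="\<lambda>x. (u x)\<^sup>2 + (v x)\<^sup>2"])
  apply auto
  using abs_mult_le_sq by (auto intro: order_trans)

lemma sqi_sq: "sqi M u \<Longrightarrow> integrable M (\<lambda>x. (u x)\<^sup>2)"
  unfolding sqi_def by auto

lemma sqi_meas: "sqi M u \<Longrightarrow> u \<in> borel_measurable M"
  unfolding sqi_def by auto

lemma sqi_add: assumes "sqi M u" "sqi M v" shows "sqi M (\<lambda>x. u x + v x)"
proof -
  have [measurable]: "u \<in> borel_measurable M" "v \<in> borel_measurable M" using assms by (auto simp: sqi_def)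
  have "integrable M (\<lambda>x. (u x)\<^sup>2 + (v x)\<^sup>2 + 2 * (u x * v x))"
    using assms sqi_mult[OF assms] by (auto simp: sqi_def)
  then show ?thesis using assms unfolding sqi_def by (simp add: power2_sum mult.assoc)
qed

lemma sqi_cmult: assumes "sqi M u" shows "sqi M (\<lambda>x. c * u x)"
proof -
  have [measurable]: "u \<in> borel_measurable M" using assms by (auto simp: sqi_def)
  show ?thesis using assms unfolding sqi_def by (simp add: power_mult_distrib)
qed

lemma sqi_uminus: assumes "sqi M u" shows "sqi M (\<lambda>x. - u x)"
  using assms unfolding sqi_def by simp

lemma sqi_diff: assumes "sqi M u" "sqi M v" shows "sqi M (\<lambda>x. u x - v x)"
  using sqi_add[OF assms(1) sqi_uminus[OF assms(2)]] by simp

lemma sqi_cong: "sqi M u \<Longrightarrow> (\<And>x. x \<in> space M \<Longrightarrow> u x = v x) \<Longrightarrow> sqi M v"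
  unfolding sqi_def
  by (metis (no_types, lifting) Bochner_Integration.integrable_cong measurable_cong)

lemma sqi_CS:
  assumes "sqi M u" "sqi M v"
  shows "(\<integral>x. u x * v x \<partial>M)\<^sup>2 \<le> (\<integral>x. (u x)\<^sup>2 \<partial>M) * (\<integral>x. (v x)\<^sup>2 \<partial>M)"
proof -
  define A where "A = (\<integral>x. (u x)\<^sup>2 \<partial>M)"
  define B where "B = (\<integral>x. (v x)\<^sup>2 \<partial>M)"
  define C where "C = (\<integral>x. u x * v x \<partial>M)"
  have q: "0 \<le> A - 2 * t * C + t\<^sup>2 * B" for t
  proof -
    have "0 \<le> (\<integral>x. (u x - t * v x)\<^sup>2 \<partial>M)" by simp
    also have "(\<integral>x. (u x - t * v x)\<^sup>2 \<partial>M) =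
       (\<integral>x. (u x)\<^sup>2 - 2 * t * (u x * v x) + t\<^sup>2 * (v x)\<^sup>2 \<partial>M)"
      by (simp add: power2_diff power_mult_distrib algebra_simps)
    also have "\<dots> = A - 2 * t * C + t\<^sup>2 * B"
      using sqi_sq[OF assms(1)] sqi_sq[OF assms(2)] sqi_mult[OF assms]
      by (simp add: A_def B_def C_def)
    finally show ?thesis .
  qed
  have A0: "0 \<le> A" unfolding A_def by simp
  have B0: "0 \<le> B" unfolding B_def by simp
  show ?thesis
  proof (cases "B = 0")
    case True
    have "C = 0"
    proof (rule ccontr)
      assume "C \<noteq> 0"
      from q[of "(A + 1) / (2 * C)"] True \<open>C \<noteq> 0\<close> show False by (simp add: field_simps)
    qed
    then show ?thesis using True by (simp add: A_def B_def C_def[symmetric])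
  next
    case False
    with B0 have Bp: "B > 0" by simp
    from q[of "C / B"] have "0 \<le> A - 2 * (C / B) * C + (C / B)\<^sup>2 * B" .
    then have "0 \<le> A * B - C\<^sup>2" using Bp by (simp add: field_simps power2_eq_square)
    then show ?thesis by (simp add: A_def B_def C_def)
  qed
qed

lemma final_ineq:
  fixes A B C lam :: real and n m :: nat
  assumes n1: "n \<ge> 1" and m1: "m \<ge> 1" and lam0: "lam \<ge> 0"
    and A0: "A \<ge> 0" and B0: "B \<ge> 0" and CS: "C\<^sup>2 \<le> A * B"
  shows "(let rho = (if A = 0 \<or> B = 0 then 0 else \<bar>C\<bar> / (sqrt A * sqrt B));
              gamma = 1 - (real m)\<^sup>2 / (real (n + m) * (real m + real n * lam)) * rho\<^sup>2
          in gamma \<ge> real n / real (n + m) \<and>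
             A \<le> (A - 2 * (real m / real (n + m)) * C + ((real m + real n * lam) / real (n + m)) * B) / gamma)"
proof -
  define N where "N = real (n + m)"
  define s where "s = real m + real n * lam"
  define rho where "rho = (if A = 0 \<or> B = 0 then 0 else \<bar>C\<bar> / (sqrt A * sqrt B))"
  define gamma where "gamma = 1 - (real m)\<^sup>2 / (N * s) * rho\<^sup>2"
  have Np: "N > 0" using n1 unfolding N_def by simp
  have nlam: "real n * lam \<ge> 0" using lam0 by simp
  have sp: "s > 0" using m1 nlam unfolding s_def by simp
  have ms: "real m \<le> s" using nlam unfolding s_def by simp
  have NnM: "N = real n + real m" unfolding N_def by simp
  have rho2: "rho\<^sup>2 \<le> 1"
  proof (cases "A = 0 \<or> B = 0")
    case True then show ?thesis unfolding rho_def by simp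
  next
    case False
    then have Ap: "A > 0" and Bp: "B > 0" using A0 B0 by auto
    have "rho\<^sup>2 = C\<^sup>2 / (A * B)" using False A0 B0
      by (simp add: rho_def power_divide power_mult_distrib)
    also have "\<dots> \<le> 1" using CS Ap Bp by simp
    finally show ?thesis .
  qed
  have rho20: "rho\<^sup>2 \<ge> 0" by simp
  have g1: "(real m)\<^sup>2 / (N * s) * rho\<^sup>2 \<le> real m / N"
  proof -
    have "(real m)\<^sup>2 * rho\<^sup>2 \<le> real m * s"
    proof -
      have "(real m)\<^sup>2 * rho\<^sup>2 \<le> (real m)\<^sup>2 * 1" using rho2 by (intro mult_left_mono) auto
      also have "\<dots> = real m * real m" by (simp add: power2_eq_square)
      also have "\<dots> \<le> real m * s" using ms by (intro mult_left_mono) auto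
      finally show ?thesis .
    qed
    then show ?thesis using Np sp by (simp add: field_simps)
  qed
  have gn: "gamma \<ge> real n / N"
  proof -
    have "real n / N = 1 - real m / N" using Np NnM by (simp add: field_simps)
    then show ?thesis using g1 unfolding gamma_def by simp
  qed
  have "real n / N > 0" using n1 Np by simp
  then have gp: "gamma > 0" using gn by linarith
  have main: "A * gamma \<le> A - 2 * (real m / N) * C + (s / N) * B"
  proof (cases "A = 0 \<or> B = 0")
    case True
    then have "C\<^sup>2 \<le> 0" using CS by auto
    then have "C = 0" by simp
    then show ?thesis using True B0 Np sp unfolding gamma_def rho_def by auto
  next
    case False
    then have Ap: "A > 0" and Bp: "B > 0" using A0 B0 by auto
    have r2: "rho\<^sup>2 = C\<^sup>2 / (A * B)" using False A0 B0
      by (simp add: rho_def power_divide power_mult_distrib)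
    have "A * gamma = A - (real m)\<^sup>2 * C\<^sup>2 / (N * s * B)"
      unfolding gamma_def r2 using Ap Bp Np sp by (simp add: field_simps power2_eq_square)
    moreover have "(real m)\<^sup>2 * C\<^sup>2 / (N * s * B) \<ge> 2 * (real m / N) * C - (s / N) * B"
    proof -
      have "0 \<le> (real m * C - s * B)\<^sup>2" by simp
      then have "2 * (real m / N) * C - (s / N) * B = ((real m)\<^sup>2 * C\<^sup>2 - (real m * C - s * B)\<^sup>2) / (N * s * B)"
        using Bp Np sp by (simp add: field_simps power2_eq_square)
      also have "\<dots> \<le> (real m)\<^sup>2 * C\<^sup>2 / (N * s * B)"
        using Bp Np sp by (intro divide_right_mono) auto
      finally show ?thesis .
    qed
    ultimately show ?thesis by linarith
  qed
  have "A \<le> (A - 2 * (real m / N) * C + (s / N) * B) / gamma"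
    using main gp by (simp add: pos_le_divide_eq)
  then show ?thesis using gn unfolding Let_def rho_def[symmetric] gamma_def[symmetric] N_def[symmetric] s_def[symmetric]
    by (simp add: gamma_def)
qed

lemma posdef_zero:
  fixes A B C lam :: real and n m :: nat
  assumes n1: "n \<ge> 1" and m1: "m \<ge> 1" and lam0: "lam \<ge> 0"
    and A0: "A \<ge> 0" and B0: "B \<ge> 0" and CS: "C\<^sup>2 \<le> A * B"
    and le: "A - 2 * (real m / real (n + m)) * C + ((real m + real n * lam) / real (n + m)) * B \<le> 0"
  shows "A = 0" "B = 0" "C = 0"
proof -
  define X where "X = A - 2 * (real m / real (n + m)) * C + ((real m + real n * lam) / real (n + m)) * B"
  define rho where "rho = (if A = 0 \<or> B = 0 then 0 else \<bar>C\<bar> / (sqrt A * sqrt B))"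
  define gamma where "gamma = 1 - (real m)\<^sup>2 / (real (n + m) * (real m + real n * lam)) * rho\<^sup>2"
  have fi: "gamma \<ge> real n / real (n + m) \<and> A \<le> X / gamma"
    using final_ineq[OF n1 m1 lam0 A0 B0 CS] unfolding Let_def X_def rho_def gamma_def .
  have "real n / real (n + m) > 0" using n1 by simp
  then have gp: "gamma > 0" using fi by linarith
  have "X / gamma \<le> 0" using le gp unfolding X_def by (simp add: divide_nonpos_pos)
  then show A: "A = 0" using fi A0 by linarith
  then have "C\<^sup>2 \<le> 0" using CS by simp
  then show C: "C = 0" by simp
  have "0 < (real m + real n * lam) / real (n + m)" using m1 lam0 by (simp add: add_pos_nonneg)
  moreover have "((real m + real n * lam) / real (n + m)) * B \<le> 0" using le A C by simp
  ultimately have "B \<le> 0" by (metis mult_le_0_iff not_less)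
  then show "B = 0" using B0 by simp
qed

lemma aux_div:
  fixes N n m l a b c d e f g h k s :: real
  assumes "N > 0" "0 = n*a + m*b + l*n*c - (n*d + m*e + l*n*f) - (N*g - 2*m*h + s*k)"
  shows "n/N*a + m/N*b + l*(n/N)*c - (n/N*d + m/N*e + l*(n/N)*f) = g - 2*(m/N)*h + (s/N)*k"
proof -
  have "(n/N*a + m/N*b + l*(n/N)*c - (n/N*d + m/N*e + l*(n/N)*f)) - (g - 2*(m/N)*h + (s/N)*k)
     = (n*a + m*b + l*n*c - (n*d + m*e + l*n*f) - (N*g - 2*m*h + s*k)) / N"
    using assms(1) by (simp add: field_simps)
  then show ?thesis using assms(2) by simp
qed

lemma key_P:
  fixes P :: "'a measure" and Y u v Mu E :: "'a \<Rightarrow> real" and n m :: nat and lam :: real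
  assumes sY: "sqi P Y" and su: "sqi P u" and sv: "sqi P v" and sM: "sqi P Mu" and sE: "sqi P E"
    and n1: "n \<ge> 1" and m1: "m \<ge> 1" and lam0: "lam \<ge> 0"
    and G0_def: "G0 = (\<lambda>p. (real m / (real m + real n * lam)) * Mu p + (1 - real m / (real m + real n * lam)) * E p)"
    and O1: "(\<integral>p. (Y p - Mu p) * (u p - Mu p) \<partial>P) = 0"
    and O2: "(\<integral>p. (Y p - E p) * (u p - Mu p) \<partial>P) = 0"
    and O3: "(\<integral>p. (Y p - E p) * (v p - G0 p) \<partial>P) = 0"
  shows "(real n / real (n + m) * (\<integral>p. (Y p - u p)\<^sup>2 \<partial>P)
   + real m / real (n + m) * (\<integral>p. (v p - u p)\<^sup>2 \<partial>P)
   + lam * (real n / real (n + m)) * (\<integral>p. (Y p - v p)\<^sup>2 \<partial>P))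
   - (real n / real (n + m) * (\<integral>p. (Y p - Mu p)\<^sup>2 \<partial>P)
   + real m / real (n + m) * (\<integral>p. (G0 p - Mu p)\<^sup>2 \<partial>P)
   + lam * (real n / real (n + m)) * (\<integral>p. (Y p - G0 p)\<^sup>2 \<partial>P))
   = (\<integral>p. (u p - Mu p)\<^sup>2 \<partial>P) - 2 * (real m / real (n + m)) * (\<integral>p. (u p - Mu p) * (v p - G0 p) \<partial>P)
     + ((real m + real n * lam) / real (n + m)) * (\<integral>p. (v p - G0 p)\<^sup>2 \<partial>P)"
proof -
  define N where "N = real (n + m)"
  define s where "s = real m + real n * lam"
  define K where "K = real m * lam * real n / s"
  have Np: "N > 0" using n1 unfolding N_def by simp
  have sp: "s > 0" using m1 lam0 unfolding s_def by (simp add: add_pos_nonneg)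
  have sG: "sqi P G0" unfolding G0_def by (intro sqi_add sqi_cmult sM sE)
  note sq = sqi_sq[OF sqi_diff] 
  note mu = sqi_mult[OF sqi_diff sqi_diff]
  have i1: "integrable P (\<lambda>p. (Y p - u p)\<^sup>2)" by (rule sq[OF sY su])
  have i2: "integrable P (\<lambda>p. (v p - u p)\<^sup>2)" by (rule sq[OF sv su])
  have i3: "integrable P (\<lambda>p. (Y p - v p)\<^sup>2)" by (rule sq[OF sY sv])
  have i4: "integrable P (\<lambda>p. (Y p - Mu p)\<^sup>2)" by (rule sq[OF sY sM])
  have i5: "integrable P (\<lambda>p. (G0 p - Mu p)\<^sup>2)" by (rule sq[OF sG sM])
  have i6: "integrable P (\<lambda>p. (Y p - G0 p)\<^sup>2)" by (rule sq[OF sY sG])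
  have i7: "integrable P (\<lambda>p. (u p - Mu p)\<^sup>2)" by (rule sq[OF su sM])
  have i8: "integrable P (\<lambda>p. (u p - Mu p) * (v p - G0 p))" by (rule mu[OF su sM sv sG])
  have i9: "integrable P (\<lambda>p. (v p - G0 p)\<^sup>2)" by (rule sq[OF sv sG])
  have j1: "integrable P (\<lambda>p. (Y p - Mu p) * (u p - Mu p))" by (rule mu[OF sY sM su sM])
  have j2: "integrable P (\<lambda>p. (Y p - E p) * (u p - Mu p))" by (rule mu[OF sY sE su sM])
  have j3: "integrable P (\<lambda>p. (Y p - E p) * (v p - G0 p))" by (rule mu[OF sY sE sv sG])
  define Phi where "Phi = (\<lambda>p. real n * (Y p - u p)\<^sup>2 + real m * (v p - u p)\<^sup>2 + lam * real n * (Y p - v p)\<^sup>2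
     - (real n * (Y p - Mu p)\<^sup>2 + real m * (G0 p - Mu p)\<^sup>2 + lam * real n * (Y p - G0 p)\<^sup>2)
     - (N * (u p - Mu p)\<^sup>2 - 2 * real m * ((u p - Mu p) * (v p - G0 p)) + s * (v p - G0 p)\<^sup>2))"
  have e1: "(\<integral>p. Phi p \<partial>P) =
     real n * (\<integral>p. (Y p - u p)\<^sup>2 \<partial>P) + real m * (\<integral>p. (v p - u p)\<^sup>2 \<partial>P) + lam * real n * (\<integral>p. (Y p - v p)\<^sup>2 \<partial>P)
     - (real n * (\<integral>p. (Y p - Mu p)\<^sup>2 \<partial>P) + real m * (\<integral>p. (G0 p - Mu p)\<^sup>2 \<partial>P) + lam * real n * (\<integral>p. (Y p - G0 p)\<^sup>2 \<partial>P))
     - (N * (\<integral>p. (u p - Mu p)\<^sup>2 \<partial>P) - 2 * real m * (\<integral>p. (u p - Mu p) * (v p - G0 p) \<partial>P) + s * (\<integral>p. (v p - G0 p)\<^sup>2 \<partial>P))"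
    unfolding Phi_def using i1 i2 i3 i4 i5 i6 i7 i8 i9 by simp
  have sG0: "s * G0 p = real m * Mu p + lam * real n * E p" for p
  proof -
    have a: "s * (real m / s) = real m" using sp by simp
    have b: "s * (1 - real m / s) = lam * real n" using sp unfolding s_def by (simp add: right_diff_distrib)
    have "s * G0 p = s * (real m / s) * Mu p + s * (1 - real m / s) * E p"
      unfolding G0_def s_def[symmetric] by (simp add: distrib_left)
    then show ?thesis unfolding a b .
  qed
  have Phi_eq: "s * Phi p = 2 * (- (real n * s + real m * lam * real n) * ((Y p - Mu p) * (u p - Mu p))
        + real m * lam * real n * ((Y p - E p) * (u p - Mu p))
        - lam * real n * s * ((Y p - E p) * (v p - G0 p)))" for p
  proof -
    have h1: "s = real m + lam * real n" unfolding s_def by simp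
    have h3: "N = real n + real m" unfolding N_def by simp
    show ?thesis unfolding Phi_def using h1 sG0[of p] h3 by algebra
  qed
  have "(\<integral>p. s * Phi p \<partial>P) = 0"
    unfolding Phi_eq using j1 j2 j3 O1 O2 O3 by simp
  then have e2: "(\<integral>p. Phi p \<partial>P) = 0" using sp by simp
  show ?thesis
    using aux_div[OF Np e1[unfolded e2]] unfolding N_def s_def .
qed

lemma L2fun_distr_sqi:
  assumes g: "g \<in> measurable P N" and f: "f \<in> L2fun (distr P N g)"
  shows "sqi P (\<lambda>p. f (g p))" "f \<in> borel_measurable N"
proof -
  have e: "borel_measurable (distr P N g) = borel_measurable N" by (rule measurable_cong_sets) simp_all
  have fm: "f \<in> borel_measurable N" using f e unfolding L2fun_def by simp
  then show "f \<in> borel_measurable N" .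
  have "integrable (distr P N g) (\<lambda>x. (f x)\<^sup>2)" using f unfolding L2fun_def by simp
  then have "integrable P (\<lambda>p. (f (g p))\<^sup>2)" using g fm by (simp add: integrable_distr_eq)
  moreover have "(\<lambda>p. f (g p)) \<in> borel_measurable P" using g fm by (rule measurable_compose)
  ultimately show "sqi P (\<lambda>p. f (g p))" unfolding sqi_def by simp
qed

lemma integrable_snd_prob:
  fixes h :: "'b \<Rightarrow> real"
  assumes D: "prob_space D" and Q: "prob_space Q" and h: "integrable Q h"
  shows "integrable (D \<Otimes>\<^sub>M Q) (\<lambda>p. h (snd p))"
proof -
  interpret D: prob_space D by fact
  interpret Q: prob_space Q by fact
  interpret DQ: pair_sigma_finite D Q by unfold_locales
  have hm: "h \<in> borel_measurable Q" using h by simp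
  have "distr (Q \<Otimes>\<^sub>M D) Q fst = Q" by (rule D.distr_pair_fst)
  then have "integrable (Q \<Otimes>\<^sub>M D) (\<lambda>p. h (fst p))"
    using h hm integrable_distr_eq[of fst "Q \<Otimes>\<^sub>M D" Q h] by simp
  then have "integrable (Q \<Otimes>\<^sub>M D) (\<lambda>(x, y). (\<lambda>p. h (snd p)) (y, x))"
    by (simp add: case_prod_unfold)
  then show ?thesis using DQ.integrable_product_swap_iff by blast
qed

lemma sqi_snd_prob:
  assumes D: "prob_space D" and Q: "prob_space Q" and h: "sqi Q h"
  shows "sqi (D \<Otimes>\<^sub>M Q) (\<lambda>p. h (snd p))"
  using integrable_snd_prob[OF D Q sqi_sq[OF h]] sqi_meas[OF h] unfolding sqi_def
  by (simp add: measurable_compose[OF measurable_snd])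

lemma AE_snd_pair:
  assumes Q: "sigma_finite_measure Q" and ae: "AE y in Q. P y"
  shows "AE p in D \<Otimes>\<^sub>M Q. P (snd p)"
proof -
  interpret Q: sigma_finite_measure Q by fact
  from ae obtain N where N: "{x \<in> space Q. \<not> P x} \<subseteq> N" "emeasure Q N = 0" "N \<in> sets Q"
    by (rule AE_E)
  have "space D \<times> N \<in> null_sets (D \<Otimes>\<^sub>M Q)"
    using N by (intro Q.times_in_null_sets2) auto
  moreover have "{x \<in> space (D \<Otimes>\<^sub>M Q). \<not> P (snd x)} \<subseteq> space D \<times> N"
    using N by (auto simp: space_pair_measure)
  ultimately show ?thesis by (rule AE_I')
qed

theorem corollary2p3:
  fixes MX :: "'x measure" and MW :: "'w measure"
    and P :: "(('x \<times> 'w) \<times> real) measure"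
    and n m :: nat and lam :: real
    and FF :: "('x \<Rightarrow> real) set" and GG :: "('x \<times> 'w \<Rightarrow> real) set"
    and fstar :: "'x \<Rightarrow> real" and gstar :: "'x \<times> 'w \<Rightarrow> real"
    and mu :: "'x \<Rightarrow> real" and eta :: "'x \<times> 'w \<Rightarrow> real"
    and fhat :: "(nat \<Rightarrow> ('x \<times> 'w) \<times> real) \<times> (nat \<Rightarrow> 'x \<times> 'w) \<Rightarrow> 'x \<Rightarrow> real"
    and ghat :: "(nat \<Rightarrow> ('x \<times> 'w) \<times> real) \<times> (nat \<Rightarrow> 'x \<times> 'w) \<Rightarrow> 'x \<times> 'w \<Rightarrow> real"
  defines "PX \<equiv> distr P MX (\<lambda>p. fst (fst p))"
    and "PZ \<equiv> distr P (MX \<Otimes>\<^sub>M MW) fst"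
    and "DM \<equiv> data_measure P (MX \<Otimes>\<^sub>M MW) n m"
  assumes P_prob: "prob_space P"
    and P_sets: "sets P = sets ((MX \<Otimes>\<^sub>M MW) \<Otimes>\<^sub>M borel)"
    and Y_sq: "integrable P (\<lambda>p. (snd p)\<^sup>2)"
    and n_pos: "n \<ge> 1" and m_pos: "m \<ge> 1" and lam_nonneg: "lam \<ge> 0"
    and F_sub: "FF \<subseteq> L2fun PX" and F_ne: "FF \<noteq> {}"
    and F_closed: "L2_closed PX FF" and F_convex: "fun_convex FF"
    and G_sub: "GG \<subseteq> L2fun PZ" and G_ne: "GG \<noteq> {}"
    and G_closed: "L2_closed PZ GG" and G_convex: "fun_convex GG"
    and fstar_in: "fstar \<in> FF" and gstar_in: "gstar \<in> GG"
    and star_min: "\<forall>f\<in>FF. \<forall>g\<in>GG. Loss P n m lam fstar gstar \<le> Loss P n m lam f g"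
    and mu_meas: "mu \<in> borel_measurable MX"
    and mu_ce: "AE p in P. mu (fst (fst p)) =
                  real_cond_exp P (vimage_algebra (space P) (\<lambda>p. fst (fst p)) MX) snd p"
    and eta_meas: "eta \<in> borel_measurable (MX \<Otimes>\<^sub>M MW)"
    and eta_ce: "AE p in P. eta (fst p) =
                  real_cond_exp P (vimage_algebra (space P) fst (MX \<Otimes>\<^sub>M MW)) snd p"
    and mu_F: "mu \<in> FF" and mu_G: "(\<lambda>z. mu (fst z)) \<in> GG" and eta_G: "eta \<in> GG"
    and fhat_meas: "(\<lambda>(d, x). fhat d x) \<in> borel_measurable (DM \<Otimes>\<^sub>M MX)"
    and ghat_meas: "(\<lambda>(d, z). ghat d z) \<in> borel_measurable (DM \<Otimes>\<^sub>M (MX \<Otimes>\<^sub>M MW))"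
    and fhat_sq: "integrable (DM \<Otimes>\<^sub>M PX) (\<lambda>(d, x). (fhat d x)\<^sup>2)"
    and ghat_sq: "integrable (DM \<Otimes>\<^sub>M PZ) (\<lambda>(d, z). (ghat d z)\<^sup>2)"
    and fhat_in: "\<forall>d\<in>space DM. fhat d \<in> FF"
    and ghat_in: "\<forall>d\<in>space DM. ghat d \<in> GG"
  shows "(let rho = rho_star DM PX PZ fstar gstar fhat ghat;
              gamma = 1 - (real m)\<^sup>2 / (real (n + m) * (real m + real n * lam)) * rho\<^sup>2
          in gamma \<ge> real n / real (n + m) \<and>
             (\<integral>(d, x). (fhat d x - mu x)\<^sup>2 \<partial>(DM \<Otimes>\<^sub>M PX))
               \<le> (\<integral>d. Loss P n m lam (fhat d) (ghat d) - Loss P n m lam fstar gstar \<partial>DM) / gamma)"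
proof -
  interpret P: prob_space P by (rule P_prob)
  have [measurable_cong]: "sets P = sets ((MX \<Otimes>\<^sub>M MW) \<Otimes>\<^sub>M borel)" by (rule P_sets)
  have sPX[measurable_cong]: "sets PX = sets MX" unfolding PX_def by simp
  have sPZ[measurable_cong]: "sets PZ = sets (MX \<Otimes>\<^sub>M MW)" unfolding PZ_def by simp
  have mX[measurable]: "(\<lambda>p. fst (fst p)) \<in> measurable P MX" by measurable
  have mZ[measurable]: "fst \<in> measurable P (MX \<Otimes>\<^sub>M MW)" by measurable
  have mY[measurable]: "snd \<in> borel_measurable P" by measurable
  note [measurable] = mu_meas eta_meas
  have PXp: "prob_space PX" unfolding PX_def by (rule P.prob_space_distr) (rule mX)
  have PZp: "prob_space PZ" unfolding PZ_def by (rule P.prob_space_distr) (rule mZ)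
  have PX_PZ: "PX = distr PZ MX fst"
    unfolding PX_def PZ_def by (subst distr_distr) (auto simp: comp_def)
  have L2sqi: "\<And>M f. f \<in> L2fun M \<Longrightarrow> sqi M f" by (simp add: L2fun_def sqi_def)
  have sY: "sqi P snd" using Y_sq unfolding sqi_def by simp
  have muL: "mu \<in> L2fun PX" using mu_F F_sub by auto
  have etaL: "eta \<in> L2fun PZ" using eta_G G_sub by auto
  have sMu: "sqi P (\<lambda>p. mu (fst (fst p)))" using L2fun_distr_sqi(1)[OF mX muL[unfolded PX_def]] .
  have sE: "sqi P (\<lambda>p. eta (fst p))" using L2fun_distr_sqi(1)[OF mZ etaL[unfolded PZ_def]] .
  define t where "t = real m / (real m + real n * lam)"
  define g0 where "g0 = (\<lambda>z. t * mu (fst z) + (1 - t) * eta z)"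
  have spos: "real m + real n * lam > 0" using m_pos lam_nonneg by (simp add: add_pos_nonneg)
  have t01: "0 \<le> t" "t \<le> 1" unfolding t_def using spos lam_nonneg by (auto simp: field_simps)
  have g0G: "g0 \<in> GG" using G_convex[unfolded fun_convex_def, rule_format, OF mu_G eta_G, of t] t01 unfolding g0_def by simp
  have g0L: "g0 \<in> L2fun PZ" using g0G G_sub by auto
  have g0m[measurable]: "g0 \<in> borel_measurable (MX \<Otimes>\<^sub>M MW)" unfolding g0_def by measurable

  have O1: "(\<integral>p. (snd p - mu (fst (fst p))) * h (fst (fst p)) \<partial>P) = 0"
    if hm: "h \<in> borel_measurable MX" and sh: "sqi P (\<lambda>p. h (fst (fst p)))" for h
  proof -
    define F1 where "F1 = vimage_algebra (space P) (\<lambda>p. fst (fst p)) MX"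
    have sub: "subalgebra P F1" unfolding subalgebra_def F1_def
      using sets_image_in_sets[OF refl mX] by simp
    interpret S: finite_measure_subalgebra P F1
      by (intro finite_measure_subalgebra.intro finite_measure_subalgebra_axioms.intro P.finite_measure_axioms sub)
    have hF: "(\<lambda>p. h (fst (fst p))) \<in> borel_measurable F1"
      unfolding F1_def
      by (rule measurable_compose[OF measurable_vimage_algebra1 hm]) (use mX in \<open>auto simp: measurable_def\<close>)
    have int: "integrable P (\<lambda>p. h (fst (fst p)) * snd p)" using sqi_mult[OF sh sY] .
    have ce: "(\<integral>p. h (fst (fst p)) * real_cond_exp P F1 snd p \<partial>P) = (\<integral>p. h (fst (fst p)) * snd p \<partial>P)"
      by (rule S.real_cond_exp_intg(2)[OF int hF]) simp
    have cem: "real_cond_exp P F1 snd \<in> borel_measurable P" by (rule borel_measurable_cond_exp2)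
    have "(\<integral>p. h (fst (fst p)) * mu (fst (fst p)) \<partial>P) = (\<integral>p. h (fst (fst p)) * real_cond_exp P F1 snd p \<partial>P)"
    proof (rule integral_cong_AE)
      show "(\<lambda>p. h (fst (fst p)) * mu (fst (fst p))) \<in> borel_measurable P"
        by (intro borel_measurable_times sqi_meas[OF sh] sqi_meas[OF sMu])
      show "(\<lambda>p. h (fst (fst p)) * real_cond_exp P F1 snd p) \<in> borel_measurable P"
        by (intro borel_measurable_times sqi_meas[OF sh] cem)
      show "AE p in P. h (fst (fst p)) * mu (fst (fst p)) = h (fst (fst p)) * real_cond_exp P F1 snd p"
        using mu_ce unfolding F1_def by eventually_elim simp
    qed
    then have e: "(\<integral>p. h (fst (fst p)) * mu (fst (fst p)) \<partial>P) = (\<integral>p. h (fst (fst p)) * snd p \<partial>P)"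
      using ce by simp
    have i2: "integrable P (\<lambda>p. h (fst (fst p)) * mu (fst (fst p)))" using sqi_mult[OF sh sMu] .
    have "(\<integral>p. (snd p - mu (fst (fst p))) * h (fst (fst p)) \<partial>P)
        = (\<integral>p. h (fst (fst p)) * snd p - h (fst (fst p)) * mu (fst (fst p)) \<partial>P)"
      by (simp add: algebra_simps)
    also have "\<dots> = 0" using int i2 e by simp
    finally show ?thesis .
  qed
  have O2: "(\<integral>p. (snd p - eta (fst p)) * h (fst p) \<partial>P) = 0"
    if hm: "h \<in> borel_measurable (MX \<Otimes>\<^sub>M MW)" and sh: "sqi P (\<lambda>p. h (fst p))" for h
  proof -
    define F1 where "F1 = vimage_algebra (space P) fst (MX \<Otimes>\<^sub>M MW)"
    have sub: "subalgebra P F1" unfolding subalgebra_def F1_def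
      using sets_image_in_sets[OF refl mZ] by simp
    interpret S: finite_measure_subalgebra P F1
      by (intro finite_measure_subalgebra.intro finite_measure_subalgebra_axioms.intro P.finite_measure_axioms sub)
    have hF: "(\<lambda>p. h (fst p)) \<in> borel_measurable F1"
      unfolding F1_def
      by (rule measurable_compose[OF measurable_vimage_algebra1 hm]) (use mZ in \<open>auto simp: measurable_def\<close>)
    have int: "integrable P (\<lambda>p. h (fst p) * snd p)" using sqi_mult[OF sh sY] .
    have ce: "(\<integral>p. h (fst p) * real_cond_exp P F1 snd p \<partial>P) = (\<integral>p. h (fst p) * snd p \<partial>P)"
      by (rule S.real_cond_exp_intg(2)[OF int hF]) simp
    have cem: "real_cond_exp P F1 snd \<in> borel_measurable P" by (rule borel_measurable_cond_exp2)
    have "(\<integral>p. h (fst p) * eta (fst p) \<partial>P) = (\<integral>p. h (fst p) * real_cond_exp P F1 snd p \<partial>P)"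
    proof (rule integral_cong_AE)
      show "(\<lambda>p. h (fst p) * eta (fst p)) \<in> borel_measurable P"
        by (intro borel_measurable_times sqi_meas[OF sh] sqi_meas[OF sE])
      show "(\<lambda>p. h (fst p) * real_cond_exp P F1 snd p) \<in> borel_measurable P"
        by (intro borel_measurable_times sqi_meas[OF sh] cem)
      show "AE p in P. h (fst p) * eta (fst p) = h (fst p) * real_cond_exp P F1 snd p"
        using eta_ce unfolding F1_def by eventually_elim simp
    qed
    then have e: "(\<integral>p. h (fst p) * eta (fst p) \<partial>P) = (\<integral>p. h (fst p) * snd p \<partial>P)"
      using ce by simp
    have i2: "integrable P (\<lambda>p. h (fst p) * eta (fst p))" using sqi_mult[OF sh sE] .
    have "(\<integral>p. (snd p - eta (fst p)) * h (fst p) \<partial>P)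
        = (\<integral>p. h (fst p) * snd p - h (fst p) * eta (fst p) \<partial>P)"
      by (simp add: algebra_simps)
    also have "\<dots> = 0" using int i2 e by simp
    finally show ?thesis .
  qed
  have Loss_eq: "Loss P n m lam f g = real n / real (n + m) * (\<integral>p. (snd p - f (fst (fst p)))\<^sup>2 \<partial>P)
     + real m / real (n + m) * (\<integral>p. (g (fst p) - f (fst (fst p)))\<^sup>2 \<partial>P)
     + lam * (real n / real (n + m)) * (\<integral>p. (snd p - g (fst p))\<^sup>2 \<partial>P)" for f g
    unfolding Loss_def by (simp add: case_prod_unfold)
  have KEY: "Loss P n m lam f g - Loss P n m lam mu g0 =
      (\<integral>x. (f x - mu x)\<^sup>2 \<partial>PX)
      - 2 * (real m / real (n + m)) * (\<integral>z. (f (fst z) - mu (fst z)) * (g z - g0 z) \<partial>PZ)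
      + ((real m + real n * lam) / real (n + m)) * (\<integral>z. (g z - g0 z)\<^sup>2 \<partial>PZ)"
    if fL: "f \<in> L2fun PX" and gL: "g \<in> L2fun PZ" for f g
  proof -
    have su: "sqi P (\<lambda>p. f (fst (fst p)))" and fm[measurable]: "f \<in> borel_measurable MX"
      using L2fun_distr_sqi[OF mX fL[unfolded PX_def]] by auto
    have sv: "sqi P (\<lambda>p. g (fst p))" and gm[measurable]: "g \<in> borel_measurable (MX \<Otimes>\<^sub>M MW)"
      using L2fun_distr_sqi[OF mZ gL[unfolded PZ_def]] by auto
    have sg0: "sqi P (\<lambda>p. g0 (fst p))"
      using L2fun_distr_sqi[OF mZ g0L[unfolded PZ_def]] by auto
    have o1: "(\<integral>p. (snd p - mu (fst (fst p))) * (f (fst (fst p)) - mu (fst (fst p))) \<partial>P) = 0"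
      using O1[of "\<lambda>x. f x - mu x"] sqi_diff[OF su sMu] by simp
    have o2: "(\<integral>p. (snd p - eta (fst p)) * (f (fst (fst p)) - mu (fst (fst p))) \<partial>P) = 0"
      using O2[of "\<lambda>z. f (fst z) - mu (fst z)"] sqi_diff[OF su sMu] by simp
    have o3: "(\<integral>p. (snd p - eta (fst p)) * (g (fst p) - (t * mu (fst (fst p)) + (1 - t) * eta (fst p))) \<partial>P) = 0"
      using O2[of "\<lambda>z. g z - g0 z"] sqi_diff[OF sv sg0] by (simp add: g0_def)
    have k: "(real n / real (n + m) * (\<integral>p. (snd p - f (fst (fst p)))\<^sup>2 \<partial>P)
     + real m / real (n + m) * (\<integral>p. (g (fst p) - f (fst (fst p)))\<^sup>2 \<partial>P)
     + lam * (real n / real (n + m)) * (\<integral>p. (snd p - g (fst p))\<^sup>2 \<partial>P))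
     - (real n / real (n + m) * (\<integral>p. (snd p - mu (fst (fst p)))\<^sup>2 \<partial>P)
     + real m / real (n + m) * (\<integral>p. (g0 (fst p) - mu (fst (fst p)))\<^sup>2 \<partial>P)
     + lam * (real n / real (n + m)) * (\<integral>p. (snd p - g0 (fst p))\<^sup>2 \<partial>P))
     = (\<integral>p. (f (fst (fst p)) - mu (fst (fst p)))\<^sup>2 \<partial>P)
       - 2 * (real m / real (n + m)) * (\<integral>p. (f (fst (fst p)) - mu (fst (fst p))) * (g (fst p) - g0 (fst p)) \<partial>P)
       + ((real m + real n * lam) / real (n + m)) * (\<integral>p. (g (fst p) - g0 (fst p))\<^sup>2 \<partial>P)"
      using key_P[of P snd "\<lambda>p. f (fst (fst p))" "\<lambda>p. g (fst p)" "\<lambda>p. mu (fst (fst p))" "\<lambda>p. eta (fst p)" n m lam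
          "\<lambda>p. g0 (fst p)", OF sY su sv sMu sE n_pos m_pos lam_nonneg _ o1 o2]
        o3 unfolding g0_def t_def by simp
    have i1: "(\<integral>x. (f x - mu x)\<^sup>2 \<partial>PX) = (\<integral>p. (f (fst (fst p)) - mu (fst (fst p)))\<^sup>2 \<partial>P)"
      unfolding PX_def by (rule integral_distr[OF mX]) measurable
    have i2: "(\<integral>z. (f (fst z) - mu (fst z)) * (g z - g0 z) \<partial>PZ) = (\<integral>p. (f (fst (fst p)) - mu (fst (fst p))) * (g (fst p) - g0 (fst p)) \<partial>P)"
      unfolding PZ_def by (rule integral_distr[OF mZ]) measurable
    have i3: "(\<integral>z. (g z - g0 z)\<^sup>2 \<partial>PZ) = (\<integral>p. (g (fst p) - g0 (fst p))\<^sup>2 \<partial>P)"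
      unfolding PZ_def by (rule integral_distr[OF mZ]) measurable
    show ?thesis unfolding Loss_eq i1 i2 i3 k[symmetric] ..
  qed
  have fsL: "fstar \<in> L2fun PX" using fstar_in F_sub by auto
  have gsL: "gstar \<in> L2fun PZ" using gstar_in G_sub by auto
  have fsm[measurable]: "fstar \<in> borel_measurable MX" using L2fun_distr_sqi(2)[OF mX fsL[unfolded PX_def]] .
  have gsm[measurable]: "gstar \<in> borel_measurable (MX \<Otimes>\<^sub>M MW)" using L2fun_distr_sqi(2)[OF mZ gsL[unfolded PZ_def]] .
  have fsLZ: "fstar \<in> L2fun (distr PZ MX fst)" using fsL PX_PZ by simp
  have mfstZ: "fst \<in> measurable PZ MX" by measurable
  have sfsZ: "sqi PZ (\<lambda>z. fstar (fst z))" using L2fun_distr_sqi(1)[OF mfstZ fsLZ] .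
  have smuZ: "sqi PZ (\<lambda>z. mu (fst z))" using L2sqi mu_G G_sub by auto
  have sgsZ: "sqi PZ gstar" using L2sqi gsL by auto
  have sg0Z: "sqi PZ g0" using L2sqi g0L by auto
  define As where "As = (\<integral>x. (fstar x - mu x)\<^sup>2 \<partial>PX)"
  define Bs where "Bs = (\<integral>z. (gstar z - g0 z)\<^sup>2 \<partial>PZ)"
  define Cs where "Cs = (\<integral>z. (fstar (fst z) - mu (fst z)) * (gstar z - g0 z) \<partial>PZ)"
  have AsZ: "As = (\<integral>z. (fstar (fst z) - mu (fst z))\<^sup>2 \<partial>PZ)"
    unfolding As_def PX_PZ by (rule integral_distr[OF mfstZ]) measurable
  have CSs: "Cs\<^sup>2 \<le> As * Bs"
    unfolding AsZ Bs_def Cs_def by (rule sqi_CS[OF sqi_diff[OF sfsZ smuZ] sqi_diff[OF sgsZ sg0Z]])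
  have As0: "As \<ge> 0" unfolding As_def by simp
  have Bs0: "Bs \<ge> 0" unfolding Bs_def by simp
  have lestar: "Loss P n m lam fstar gstar \<le> Loss P n m lam mu g0" using star_min mu_F g0G by auto
  have KS: "Loss P n m lam fstar gstar - Loss P n m lam mu g0 = As - 2 * (real m / real (n + m)) * Cs + ((real m + real n * lam) / real (n + m)) * Bs"
    unfolding As_def Bs_def Cs_def by (rule KEY[OF fsL gsL])
  have Z: "As = 0" "Bs = 0" "Cs = 0"
    using posdef_zero[OF n_pos m_pos lam_nonneg As0 Bs0 CSs] KS lestar by auto
  have Lstar: "Loss P n m lam fstar gstar = Loss P n m lam mu g0" using KS Z by simp
  have ae_f: "AE x in PX. fstar x = mu x"
  proof -
    have "integrable PX (\<lambda>x. (fstar x - mu x)\<^sup>2)"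
      using sqi_sq[OF sqi_diff[OF L2sqi[OF fsL] L2sqi[OF muL]]] .
    then have "AE x in PX. (fstar x - mu x)\<^sup>2 = 0"
      using Z(1) unfolding As_def by (subst integral_nonneg_eq_0_iff_AE[symmetric]) auto
    then show ?thesis by eventually_elim simp
  qed
  have ae_g: "AE z in PZ. gstar z = g0 z"
  proof -
    have "integrable PZ (\<lambda>z. (gstar z - g0 z)\<^sup>2)"
      using sqi_sq[OF sqi_diff[OF sgsZ sg0Z]] .
    then have "AE z in PZ. (gstar z - g0 z)\<^sup>2 = 0"
      using Z(2) unfolding Bs_def by (subst integral_nonneg_eq_0_iff_AE[symmetric]) auto
    then show ?thesis by eventually_elim simp
  qed
  have ae_fZ: "AE z in PZ. fstar (fst z) = mu (fst z)"
    using AE_distrD[OF mfstZ ae_f[unfolded PX_PZ]] .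
  have PZ_eq: "distr P (MX \<Otimes>\<^sub>M MW) fst = PZ" unfolding PZ_def ..
  have DMp: "prob_space DM"
    unfolding DM_def data_measure_def PZ_eq
    by (intro prob_space_pair prob_space_PiM P_prob PZp)
  interpret DM: prob_space DM by (rule DMp)
  interpret PXs: prob_space PX by (rule PXp)
  interpret PZs: prob_space PZ by (rule PZp)
  interpret DX: pair_sigma_finite DM PX by unfold_locales
  interpret DZ: pair_sigma_finite DM PZ by unfold_locales
  have sDX: "sets (DM \<Otimes>\<^sub>M PX) = sets (DM \<Otimes>\<^sub>M MX)" by (rule sets_pair_measure_cong) (simp_all add: sPX)
  have sDZ: "sets (DM \<Otimes>\<^sub>M PZ) = sets (DM \<Otimes>\<^sub>M (MX \<Otimes>\<^sub>M MW))" by (rule sets_pair_measure_cong) (simp_all add: sPZ)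
  have mDX: "measurable (DM \<Otimes>\<^sub>M PX) = measurable (DM \<Otimes>\<^sub>M MX)" by (rule ext, rule measurable_cong_sets[OF sDX refl])
  have mDZ: "measurable (DM \<Otimes>\<^sub>M PZ) = measurable (DM \<Otimes>\<^sub>M (MX \<Otimes>\<^sub>M MW))" by (rule ext, rule measurable_cong_sets[OF sDZ refl])
  have mT: "(\<lambda>p. (fst p, fst (snd p))) \<in> measurable (DM \<Otimes>\<^sub>M PZ) (DM \<Otimes>\<^sub>M MX)"
    unfolding mDZ by measurable
  have TR: "DM \<Otimes>\<^sub>M PX = distr (DM \<Otimes>\<^sub>M PZ) (DM \<Otimes>\<^sub>M MX) (\<lambda>p. (fst p, fst (snd p)))"
  proof -
    have "distr DM DM (\<lambda>x. x) \<Otimes>\<^sub>M distr PZ MX fst = distr (DM \<Otimes>\<^sub>M PZ) (DM \<Otimes>\<^sub>M MX) (\<lambda>(x, y). (x, fst y))"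
      by (rule pair_measure_distr) (use mfstZ PXp PX_PZ prob_space_imp_sigma_finite in auto)
    then show ?thesis unfolding PX_PZ[symmetric] by (simp add: case_prod_unfold)
  qed
  have fhm: "(\<lambda>p. fhat (fst p) (snd p)) \<in> borel_measurable (DM \<Otimes>\<^sub>M MX)"
    using fhat_meas by (simp add: case_prod_unfold)
  have ghm: "(\<lambda>p. ghat (fst p) (snd p)) \<in> borel_measurable (DM \<Otimes>\<^sub>M (MX \<Otimes>\<^sub>M MW))"
    using ghat_meas by (simp add: case_prod_unfold)
  have sfh: "sqi (DM \<Otimes>\<^sub>M PX) (\<lambda>p. fhat (fst p) (snd p))"
    unfolding sqi_def mDX using fhm fhat_sq by (simp add: case_prod_unfold)
  have sgh: "sqi (DM \<Otimes>\<^sub>M PZ) (\<lambda>p. ghat (fst p) (snd p))"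
    unfolding sqi_def mDZ using ghm ghat_sq by (simp add: case_prod_unfold)
  have smuX: "sqi (DM \<Otimes>\<^sub>M PX) (\<lambda>p. mu (snd p))" by (rule sqi_snd_prob[OF DMp PXp L2sqi[OF muL]])
  have smuZ2: "sqi (DM \<Otimes>\<^sub>M PZ) (\<lambda>p. mu (fst (snd p)))" using sqi_snd_prob[OF DMp PZp smuZ] by simp
  have sg0Z2: "sqi (DM \<Otimes>\<^sub>M PZ) (\<lambda>p. g0 (snd p))" by (rule sqi_snd_prob[OF DMp PZp sg0Z])
  have fhTm: "(\<lambda>p. fhat (fst p) (fst (snd p))) \<in> borel_measurable (DM \<Otimes>\<^sub>M PZ)"
    using measurable_compose[OF mT fhm] by simp
  have fhT: "integrable (DM \<Otimes>\<^sub>M PZ) (\<lambda>p. (fhat (fst p) (fst (snd p)))\<^sup>2)"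
  proof -
    have "integrable (DM \<Otimes>\<^sub>M PX) (\<lambda>p. (fhat (fst p) (snd p))\<^sup>2)" using sqi_sq[OF sfh] .
    then show ?thesis unfolding TR using integrable_distr_eq[OF mT, of "\<lambda>p. (fhat (fst p) (snd p))\<^sup>2"] fhm
      by simp
  qed
  have sfhZ: "sqi (DM \<Otimes>\<^sub>M PZ) (\<lambda>p. fhat (fst p) (fst (snd p)))"
    unfolding sqi_def using fhTm fhT by simp
  define A where "A = (\<integral>p. (fhat (fst p) (snd p) - mu (snd p))\<^sup>2 \<partial>(DM \<Otimes>\<^sub>M PX))"
  define B where "B = (\<integral>p. (ghat (fst p) (snd p) - g0 (snd p))\<^sup>2 \<partial>(DM \<Otimes>\<^sub>M PZ))"
  define C where "C = (\<integral>p. (fhat (fst p) (fst (snd p)) - mu (fst (snd p))) * (ghat (fst p) (snd p) - g0 (snd p)) \<partial>(DM \<Otimes>\<^sub>M PZ))"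
  have A': "A = (\<integral>p. (fhat (fst p) (fst (snd p)) - mu (fst (snd p)))\<^sup>2 \<partial>(DM \<Otimes>\<^sub>M PZ))"
  proof -
    have m1: "(\<lambda>p. (fhat (fst p) (snd p) - mu (snd p))\<^sup>2) \<in> borel_measurable (DM \<Otimes>\<^sub>M MX)"
      using fhm by measurable
    show ?thesis unfolding A_def TR by (subst integral_distr[OF mT m1]) simp
  qed
  have CS: "C\<^sup>2 \<le> A * B"
    unfolding A' B_def C_def by (rule sqi_CS[OF sqi_diff[OF sfhZ smuZ2] sqi_diff[OF sgh sg0Z2]])
  have A0: "A \<ge> 0" unfolding A_def by simp
  have B0: "B \<ge> 0" unfolding B_def by simp
  have aeZ2: "AE p in DM \<Otimes>\<^sub>M PZ. fstar (fst (snd p)) = mu (fst (snd p)) \<and> gstar (snd p) = g0 (snd p)"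
  proof -
    have "AE z in PZ. fstar (fst z) = mu (fst z) \<and> gstar z = g0 z" using ae_fZ ae_g by eventually_elim simp
    from AE_snd_pair[OF PZs.sigma_finite_measure_axioms this] show ?thesis .
  qed
  have aeX2: "AE p in DM \<Otimes>\<^sub>M PX. fstar (snd p) = mu (snd p)"
    using AE_snd_pair[OF PXs.sigma_finite_measure_axioms ae_f] .
  have sfsX2: "sqi (DM \<Otimes>\<^sub>M PX) (\<lambda>p. fstar (snd p))" by (rule sqi_snd_prob[OF DMp PXp L2sqi[OF fsL]])
  have sfsZ2: "sqi (DM \<Otimes>\<^sub>M PZ) (\<lambda>p. fstar (fst (snd p)))" using sqi_snd_prob[OF DMp PZp sfsZ] by simp
  have sgsZ2: "sqi (DM \<Otimes>\<^sub>M PZ) (\<lambda>p. gstar (snd p))" by (rule sqi_snd_prob[OF DMp PZp sgsZ])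
  have ra: "(\<integral>(d, x). (fstar x - fhat d x)\<^sup>2 \<partial>(DM \<Otimes>\<^sub>M PX)) = A"
    unfolding A_def case_prod_unfold
  proof (rule integral_cong_AE)
    show "(\<lambda>p. (fstar (snd p) - fhat (fst p) (snd p))\<^sup>2) \<in> borel_measurable (DM \<Otimes>\<^sub>M PX)"
      by (intro borel_measurable_power borel_measurable_diff sqi_meas[OF sfsX2] sqi_meas[OF sfh])
    show "(\<lambda>p. (fhat (fst p) (snd p) - mu (snd p))\<^sup>2) \<in> borel_measurable (DM \<Otimes>\<^sub>M PX)"
      by (intro borel_measurable_power borel_measurable_diff sqi_meas[OF smuX] sqi_meas[OF sfh])
    show "AE p in DM \<Otimes>\<^sub>M PX. (fstar (snd p) - fhat (fst p) (snd p))\<^sup>2 = (fhat (fst p) (snd p) - mu (snd p))\<^sup>2"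
      using aeX2 by eventually_elim (simp add: power2_commute)
  qed
  have rb: "(\<integral>(d, z). (gstar z - ghat d z)\<^sup>2 \<partial>(DM \<Otimes>\<^sub>M PZ)) = B"
    unfolding B_def case_prod_unfold
  proof (rule integral_cong_AE)
    show "(\<lambda>p. (gstar (snd p) - ghat (fst p) (snd p))\<^sup>2) \<in> borel_measurable (DM \<Otimes>\<^sub>M PZ)"
      by (intro borel_measurable_power borel_measurable_diff sqi_meas[OF sgsZ2] sqi_meas[OF sgh])
    show "(\<lambda>p. (ghat (fst p) (snd p) - g0 (snd p))\<^sup>2) \<in> borel_measurable (DM \<Otimes>\<^sub>M PZ)"
      by (intro borel_measurable_power borel_measurable_diff sqi_meas[OF sg0Z2] sqi_meas[OF sgh])
    show "AE p in DM \<Otimes>\<^sub>M PZ. (gstar (snd p) - ghat (fst p) (snd p))\<^sup>2 = (ghat (fst p) (snd p) - g0 (snd p))\<^sup>2"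
      using aeZ2 by eventually_elim (simp add: power2_commute)
  qed
  have rc: "(\<integral>(d, z). (fstar (fst z) - fhat d (fst z)) * (gstar z - ghat d z) \<partial>(DM \<Otimes>\<^sub>M PZ)) = C"
    unfolding C_def case_prod_unfold
  proof (rule integral_cong_AE)
    show "(\<lambda>p. (fstar (fst (snd p)) - fhat (fst p) (fst (snd p))) * (gstar (snd p) - ghat (fst p) (snd p))) \<in> borel_measurable (DM \<Otimes>\<^sub>M PZ)"
      by (intro borel_measurable_times borel_measurable_diff sqi_meas[OF sfsZ2] sqi_meas[OF sfhZ] sqi_meas[OF sgsZ2] sqi_meas[OF sgh])
    show "(\<lambda>p. (fhat (fst p) (fst (snd p)) - mu (fst (snd p))) * (ghat (fst p) (snd p) - g0 (snd p))) \<in> borel_measurable (DM \<Otimes>\<^sub>M PZ)"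
      by (intro borel_measurable_times borel_measurable_diff sqi_meas[OF smuZ2] sqi_meas[OF sfhZ] sqi_meas[OF sg0Z2] sqi_meas[OF sgh])
    show "AE p in DM \<Otimes>\<^sub>M PZ. (fstar (fst (snd p)) - fhat (fst p) (fst (snd p))) * (gstar (snd p) - ghat (fst p) (snd p))
        = (fhat (fst p) (fst (snd p)) - mu (fst (snd p))) * (ghat (fst p) (snd p) - g0 (snd p))"
      using aeZ2 by eventually_elim (simp add: algebra_simps)
  qed
  have rho_eq: "rho_star DM PX PZ fstar gstar fhat ghat = (if A = 0 \<or> B = 0 then 0 else \<bar>C\<bar> / (sqrt A * sqrt B))"
    unfolding rho_star_def Let_def ra rb rc ..
  have lhs_eq: "(\<integral>(d, x). (fhat d x - mu x)\<^sup>2 \<partial>(DM \<Otimes>\<^sub>M PX)) = A"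
    unfolding A_def case_prod_unfold ..
  have iA: "integrable (DM \<Otimes>\<^sub>M PX) (\<lambda>p. (fhat (fst p) (snd p) - mu (snd p))\<^sup>2)"
    using sqi_sq[OF sqi_diff[OF sfh smuX]] .
  have iB: "integrable (DM \<Otimes>\<^sub>M PZ) (\<lambda>p. (ghat (fst p) (snd p) - g0 (snd p))\<^sup>2)"
    using sqi_sq[OF sqi_diff[OF sgh sg0Z2]] .
  have iC: "integrable (DM \<Otimes>\<^sub>M PZ) (\<lambda>p. (fhat (fst p) (fst (snd p)) - mu (fst (snd p))) * (ghat (fst p) (snd p) - g0 (snd p)))"
    using sqi_mult[OF sqi_diff[OF sfhZ smuZ2] sqi_diff[OF sgh sg0Z2]] .
  have fA: "(\<integral>d. (\<integral>x. (fhat d x - mu x)\<^sup>2 \<partial>PX) \<partial>DM) = A"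
    using DX.integral_fst'[OF iA] unfolding A_def by simp
  have fB: "(\<integral>d. (\<integral>z. (ghat d z - g0 z)\<^sup>2 \<partial>PZ) \<partial>DM) = B"
    using DZ.integral_fst'[OF iB] unfolding B_def by simp
  have fC: "(\<integral>d. (\<integral>z. (fhat d (fst z) - mu (fst z)) * (ghat d z - g0 z) \<partial>PZ) \<partial>DM) = C"
    using DZ.integral_fst'[OF iC] unfolding C_def by simp
  have jA: "integrable DM (\<lambda>d. \<integral>x. (fhat d x - mu x)\<^sup>2 \<partial>PX)"
    using DX.integrable_fst'[OF iA] by simp
  have jB: "integrable DM (\<lambda>d. \<integral>z. (ghat d z - g0 z)\<^sup>2 \<partial>PZ)"
    using DZ.integrable_fst'[OF iB] by simp
  have jC: "integrable DM (\<lambda>d. \<integral>z. (fhat d (fst z) - mu (fst z)) * (ghat d z - g0 z) \<partial>PZ)"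
    using DZ.integrable_fst'[OF iC] by simp
  have ex_eq: "(\<integral>d. Loss P n m lam (fhat d) (ghat d) - Loss P n m lam fstar gstar \<partial>DM)
      = A - 2 * (real m / real (n + m)) * C + ((real m + real n * lam) / real (n + m)) * B"
  proof -
    have "(\<integral>d. Loss P n m lam (fhat d) (ghat d) - Loss P n m lam fstar gstar \<partial>DM)
      = (\<integral>d. (\<integral>x. (fhat d x - mu x)\<^sup>2 \<partial>PX)
          - 2 * (real m / real (n + m)) * (\<integral>z. (fhat d (fst z) - mu (fst z)) * (ghat d z - g0 z) \<partial>PZ)
          + ((real m + real n * lam) / real (n + m)) * (\<integral>z. (ghat d z - g0 z)\<^sup>2 \<partial>PZ) \<partial>DM)"
    proof (rule Bochner_Integration.integral_cong[OF refl])
      fix d assume d: "d \<in> space DM"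
      have fl: "fhat d \<in> L2fun PX" using fhat_in d F_sub by auto
      have gl: "ghat d \<in> L2fun PZ" using ghat_in d G_sub by auto
      show "Loss P n m lam (fhat d) (ghat d) - Loss P n m lam fstar gstar =
        (\<integral>x. (fhat d x - mu x)\<^sup>2 \<partial>PX)
          - 2 * (real m / real (n + m)) * (\<integral>z. (fhat d (fst z) - mu (fst z)) * (ghat d z - g0 z) \<partial>PZ)
          + ((real m + real n * lam) / real (n + m)) * (\<integral>z. (ghat d z - g0 z)\<^sup>2 \<partial>PZ)"
        using KEY[OF fl gl] Lstar by simp
    qed
    also have "\<dots> = A - 2 * (real m / real (n + m)) * C + ((real m + real n * lam) / real (n + m)) * B"
      using jA jB jC fA fB fC by simp
    finally show ?thesis .
  qed
  show ?thesis
    unfolding rho_eq lhs_eq ex_eq using final_ineq[OF n_pos m_pos lam_nonneg A0 B0 CS] .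
qed

end
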